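(* Let $N\ge1$, $\mathcal C=(-\tfrac14,\tfrac14)^N$, and for $S\subset[\![N]\!]$ define $K_S:\mathcal C\to\mathbb R$ by $K_S(b)=\frac{N+4-2|S|}{16}+\sum_{i\in S}b_i^2-\sum_{i\notin S}b_i^2$, and $V_S=\{b\in\mathcal C:K_S(b)=0\}$. Let $\alpha,\alpha':\mathcal P([\![N]\!])\to\{-1,0,1\}$ be functions, put $M_\alpha=\{b\in\mathcal C:\operatorname{sgn}K_S(b)=\alpha(S)\text{ for all }S\}$ and $V(\alpha)=\bigcap_{\alpha(S)=0}V_S$ (with $V(\alpha)=\mathcal C$ if $\alpha^{-1}(0)=\emptyset$), and define $\dim M_\alpha:=\dim V(\alpha)$. Suppose $M_\alpha$ and $M_{\alpha'}$ are nonempty and a sequence in $M_\alpha$ converges to a point of $M_{\alpha'}$. Then either $\alpha=\alpha'$ or $\dim M_{\alpha'}<\dim M_\alpha$.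
   Context: $[\![N]\!]=\{1,\dots,N\}$, $\mathcal P([\![N]\!])$ its power set, and $\dim$ denotes the dimension of a real algebraic set (these $V(\alpha)$ are solution sets of linear equations in the variables $b_i^2$). Note $S\subsetneq S'$ implies $K_{S'}<K_S$ on $\mathcal C$. *)

theory Defs
  imports "HOL-Analysis.Analysis"
begin

text \<open>The index set [[N]] is a finite type 'n with N = CARD('n) (so N >= 1 automatically);
  points of R^N are vectors of type real^'n.\<close>

definition cube :: "(real^'n::finite) set" where
  "cube = {b. \<forall>i. \<bar>b$i\<bar> < 1/4}"

definition K :: "'n::finite set \<Rightarrow> real^'n \<Rightarrow> real" where
  "K S b = (real CARD('n) + 4 - 2 * real (card S)) / 16
           + (\<Sum>i\<in>S. (b$i)^2) - (\<Sum>i\<in>-S. (b$i)^2)"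

definition Vset :: "'n::finite set \<Rightarrow> (real^'n) set" where
  "Vset S = {b \<in> cube. K S b = 0}"

definition Mset :: "('n::finite set \<Rightarrow> int) \<Rightarrow> (real^'n) set" where
  "Mset \<alpha> = {b \<in> cube. \<forall>S. sgn (K S b) = of_int (\<alpha> S)}"

definition Valpha :: "('n::finite set \<Rightarrow> int) \<Rightarrow> (real^'n) set" where
  "Valpha \<alpha> = cube \<inter> (\<Inter>S\<in>{S. \<alpha> S = 0}. Vset S)"

text \<open>Dimension of a (semi)algebraic subset A of R^N: the largest d such that A contains
  a continuous injective image of a nonempty open subset of a d-dimensional linear subspace
  (equivalently, by invariance of domain, of an open subset of R^d).  For real
  (semi)algebraic sets this agrees with the algebraic (Krull) dimension.\<close>
definition sa_dim :: "(real^'n::finite) set \<Rightarrow> nat" where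
  "sa_dim A = (GREATEST d. \<exists>(T::(real^'n) set) U (f::real^'n \<Rightarrow> real^'n). subspace T \<and> dim T = d \<and> openin (top_of_set T) U
      \<and> U \<noteq> {} \<and> continuous_on U f \<and> inj_on f U \<and> f ` U \<subseteq> A)"

definition dimM :: "('n::finite set \<Rightarrow> int) \<Rightarrow> nat" where
  "dimM \<alpha> = sa_dim (Valpha \<alpha>)"

end

theory Submission
  imports Defs
begin

definition sqv :: "real^'n::finite \<Rightarrow> real^'n" where
  "sqv b = (\<chi> i. (b$i)^2)"

definition LL :: "'n::finite set \<Rightarrow> real^'n \<Rightarrow> real" where
  "LL S c = (real CARD('n) + 4 - 2 * real (card S)) / 16
           + (\<Sum>i\<in>S. c$i) - (\<Sum>i\<in>-S. c$i)"

definition Cset :: "('n::finite set \<Rightarrow> int) \<Rightarrow> (real^'n) set" where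
  "Cset \<alpha> = {c. (\<forall>i. 0 \<le> c$i \<and> c$i < 1/16) \<and> (\<forall>S. \<alpha> S = 0 \<longrightarrow> LL S c = 0)}"

lemma K_LL: "K (S::'n::finite set) b = LL S (sqv b)"
  by (simp add: K_def LL_def sqv_def)

lemma cube_sq: "b \<in> cube \<longleftrightarrow> (\<forall>i. (b$i)^2 < 1/16)"
proof -
  have "\<bar>x\<bar> < 1/4 \<longleftrightarrow> x^2 < 1/16" for x :: real
  proof -
    have "x^2 = \<bar>x\<bar>^2" by simp
    moreover have "(1/16::real) = (1/4)^2" by (simp add: power2_eq_square)
    ultimately show ?thesis
      by (metis abs_ge_zero abs_of_nonneg power_less_imp_less_base zero_le_divide_1_iff zero_le_numeral power_strict_mono zero_less_numeral pos2)
  qed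
  then show ?thesis by (simp add: cube_def)
qed

lemma Valpha_iff: "b \<in> Valpha \<alpha> \<longleftrightarrow> sqv b \<in> Cset \<alpha>"
  by (auto simp: Valpha_def Vset_def Cset_def cube_sq K_LL sqv_def)

lemma Mset_sub: "Mset \<alpha> \<subseteq> Valpha \<alpha>"
  by (auto simp: Mset_def Valpha_def Vset_def) (metis of_int_0 sgn_eq_0_iff)

lemma LL_affine: fixes c d :: "real^'n::finite" shows "u + v = 1 \<Longrightarrow> LL S (u *\<^sub>R c + v *\<^sub>R d) = u * LL S c + v * LL S d"
proof -
  assume h: "u + v = 1"
  have gen: "(u+v) * a + (u * p + v * r) - (u * q + v * s) = u * (a+p-q) + v * (a+r-s)" for a p q r s :: real
    by (simp add: algebra_simps)
  define a where "a = (real CARD('n) + 4 - 2 * real (card S)) / 16"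
  have "LL S (u *\<^sub>R c + v *\<^sub>R d) = a + (u * (\<Sum>i\<in>S. c$i) + v * (\<Sum>i\<in>S. d$i))
     - (u * (\<Sum>i\<in>-S. c$i) + v * (\<Sum>i\<in>-S. d$i))"
    by (simp add: LL_def a_def sum.distrib sum_distrib_left)
  also have "\<dots> = (u+v) * a + (u * (\<Sum>i\<in>S. c$i) + v * (\<Sum>i\<in>S. d$i))
     - (u * (\<Sum>i\<in>-S. c$i) + v * (\<Sum>i\<in>-S. d$i))" using h by simp
  also have "\<dots> = u * (a + (\<Sum>i\<in>S. c$i) - (\<Sum>i\<in>-S. c$i)) + v * (a + (\<Sum>i\<in>S. d$i) - (\<Sum>i\<in>-S. d$i))"
    by (rule gen)
  also have "\<dots> = u * LL S c + v * LL S d" unfolding LL_def a_def by (rule refl)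
  finally show ?thesis .
qed

lemma convex_Cset: "convex (Cset \<alpha>)"
  unfolding convex_def Cset_def
proof (intro ballI allI impI, goal_cases)
  case (1 x y u v)
  have a: "0 \<le> (u *\<^sub>R x + v *\<^sub>R y) $ i \<and> (u *\<^sub>R x + v *\<^sub>R y) $ i < 1/16" for i
  proof -
    have "x$i < 1/16" "y$i < 1/16" "0 \<le> x$i" "0 \<le> y$i" using 1 by auto
    have "u * x$i \<le> u * (1/16)" using mult_left_mono[OF less_imp_le[OF \<open>x$i < 1/16\<close>], of u] 1 by simp
    moreover have "v * y$i \<le> v * (1/16)" using mult_left_mono[OF less_imp_le[OF \<open>y$i < 1/16\<close>], of v] 1 by simp
    moreover have "u * x$i < u * (1/16) \<or> v * y$i < v * (1/16)" using 1 \<open>x$i < 1/16\<close> \<open>y$i < 1/16\<close>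
    proof (cases "u > 0")
      case True then show ?thesis using \<open>x$i < 1/16\<close> by simp
    next
      case False then have "v > 0" using 1 by simp
      then show ?thesis using \<open>y$i < 1/16\<close> by simp
    qed
    ultimately show ?thesis using 1 \<open>0 \<le> x$i\<close> \<open>0 \<le> y$i\<close> by (auto simp: algebra_simps)
  qed
  show ?case using a 1 by (auto simp: LL_affine)
qed

lemma affine_LL0: "affine {c. LL S c = 0}"
  unfolding affine_def by (auto simp: LL_affine)

definition sqrtv :: "real^'n::finite \<Rightarrow> real^'n" where
  "sqrtv c = (\<chi> i. sqrt (c$i))"

definition Pd :: "(real^'n::finite) set \<Rightarrow> nat \<Rightarrow> bool" where
  "Pd A d = (\<exists>(T::(real^'n) set) U (f::real^'n \<Rightarrow> real^'n). subspace T \<and> dim T = d \<and> openin (top_of_set T) U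
      \<and> U \<noteq> {} \<and> continuous_on U f \<and> inj_on f U \<and> f ` U \<subseteq> A)"

lemma sa_dim_Pd: "sa_dim A = Greatest (Pd A)"
  unfolding sa_dim_def Pd_def by (rule refl)

lemma Pd_bound: "Pd A d \<Longrightarrow> d \<le> CARD('n)" for A :: "(real^'n::finite) set"
  unfolding Pd_def using dim_subset_UNIV_cart by blast

lemma Pd_0: "A \<noteq> {} \<Longrightarrow> Pd A 0"
proof -
  assume "A \<noteq> {}"
  then obtain a where "a \<in> A" by auto
  show ?thesis unfolding Pd_def
    apply (rule exI[of _ "{0}"], rule exI[of _ "{0}"], rule exI[of _ "\<lambda>_. a"])
    using \<open>a \<in> A\<close> by (auto simp: subspace_0 openin_subtopology_refl)
qed

lemma sign_same: "\<bar>x - y\<bar> < \<bar>y\<bar> \<Longrightarrow> x * y > (0::real)"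
  by (smt (verit) mult_neg_neg mult_pos_pos)

lemma sq_eq_same: "x^2 = y^2 \<Longrightarrow> x * z > 0 \<Longrightarrow> y * z > (0::real) \<Longrightarrow> x = y"
  by (smt (verit) mult_neg_pos mult_pos_neg power2_eq_iff mult_minus_left)

lemma witness_bound:
  fixes A C T U :: "(real^'n::finite) set" and f :: "real^'n \<Rightarrow> real^'n"
  assumes sub: "sqv ` A \<subseteq> C" and T: "subspace T" and ope: "openin (top_of_set T) U"
    and ne: "U \<noteq> {}" and cont: "continuous_on U f" and inj: "inj_on f U" and fU: "f ` U \<subseteq> A"
  shows "int (dim T) \<le> aff_dim C"
proof -
  define nz where "nz u = {i. f u $ i \<noteq> 0}" for u
  have cb: "card (nz u) < CARD('n) + 1" for u
    using card_mono[of "UNIV::'n set" "nz u"] by simp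
  obtain u1 where "u1 \<in> U" using ne by auto
  obtain u0 where u0: "u0 \<in> U" and max: "\<And>u. u \<in> U \<Longrightarrow> card (nz u) \<le> card (nz u0)"
    using ex_has_greatest_nat[of "\<lambda>u. u \<in> U" u1 "\<lambda>u. card (nz u)" "CARD('n) + 1"] \<open>u1 \<in> U\<close> cb
    by blast
  define J where "J = nz u0"
  define \<epsilon> where "\<epsilon> = Min (insert 1 ((\<lambda>i. \<bar>f u0 $ i\<bar>) ` J))"
  have epos: "\<epsilon> > 0" unfolding \<epsilon>_def J_def nz_def by (auto simp: Min_gr_iff)
  have ele: "\<epsilon> \<le> \<bar>f u0 $ i\<bar>" if "i \<in> J" for i
    unfolding \<epsilon>_def using that by (auto intro!: Min_le)
  obtain \<delta> where dpos: "\<delta> > 0" and dl: "\<And>u. u \<in> U \<Longrightarrow> dist u u0 < \<delta> \<Longrightarrow> dist (f u) (f u0) < \<epsilon>"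
    using cont u0 epos unfolding continuous_on_iff by blast
  obtain r where rpos: "r > 0" and rb: "ball u0 r \<inter> T \<subseteq> U"
    using ope u0 unfolding openin_contains_ball by blast
  have u0T: "u0 \<in> T" using ope u0 openin_imp_subset by blast
  define V where "V = T \<inter> ball u0 (min \<delta> r)"
  have VU: "V \<subseteq> U" using rb unfolding V_def by auto
  have sgnJ: "f u $ i * f u0 $ i > 0" if "u \<in> V" "i \<in> J" for u i
  proof -
    have "dist (f u) (f u0) < \<epsilon>" using dl[of u] that VU unfolding V_def by (auto simp: dist_commute)
    then have "\<bar>f u $ i - f u0 $ i\<bar> < \<bar>f u0 $ i\<bar>"
      using ele[OF that(2)] component_le_norm_cart[of "f u - f u0" i] by (simp add: dist_norm)
    then show ?thesis by (rule sign_same)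
  qed
  have sgn0: "f u $ i = 0" if "u \<in> V" "i \<notin> J" for u i
  proof (rule ccontr)
    assume "f u $ i \<noteq> 0"
    then have "insert i J \<subseteq> nz u" using sgnJ[OF that(1)] unfolding nz_def by fastforce
    then have "card (insert i J) \<le> card (nz u)" by (intro card_mono) auto
    then have "card J < card (nz u)" using that(2) by simp
    then show False using max[of u] VU that(1) unfolding J_def by auto
  qed
  define g where "g u = sqv (f u)" for u
  have ginj: "inj_on g V"
  proof (rule inj_onI)
    fix u v assume uv: "u \<in> V" "v \<in> V" "g u = g v"
    have "f u $ i = f v $ i" for i
    proof (cases "i \<in> J")
      case True
      have "(f u $ i)^2 = (f v $ i)^2" using uv(3) unfolding g_def sqv_def by (metis vec_lambda_beta)
      then show ?thesis using sq_eq_same sgnJ[OF uv(1) True] sgnJ[OF uv(2) True] by blast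
    next
      case False then show ?thesis using sgn0 uv by simp
    qed
    then have "f u = f v" by (simp add: vec_eq_iff)
    then show "u = v" using inj uv VU by (auto dest: inj_onD)
  qed
  have gcont: "continuous_on V g"
    unfolding g_def sqv_def
    by (intro continuous_intros continuous_on_subset[OF cont VU])
  have gim: "g \<in> V \<rightarrow> affine hull C"
    using VU fU sub hull_subset unfolding g_def by fastforce
  have cV: "convex V" unfolding V_def by (intro convex_Int subspace_imp_convex T convex_ball)
  have "aff_dim V \<le> aff_dim C"
    by (rule invariance_of_dimension_convex_domain[OF cV gcont gim ginj])
  moreover have "aff_dim V = aff_dim T" unfolding V_def
    by (rule aff_dim_convex_Int_open) (use u0T dpos rpos T subspace_imp_convex in auto)
  ultimately show ?thesis using aff_dim_subspace[OF T] by simp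
qed

lemma sa_dim_upper:
  fixes A C :: "(real^'n::finite) set"
  assumes "A \<noteq> {}" "sqv ` A \<subseteq> C"
  shows "int (sa_dim A) \<le> aff_dim C"
proof -
  have "Pd A (Greatest (Pd A))"
    by (rule GreatestI_nat[of "Pd A" 0, OF Pd_0[OF assms(1)]]) (rule Pd_bound)
  from this[unfolded Pd_def[of A "Greatest (Pd A)"]]
  obtain T U and f :: "real^'n \<Rightarrow> real^'n" where H: "subspace (T :: (real^'n) set) \<and> dim T = Greatest (Pd A) \<and> openin (top_of_set T) U
      \<and> U \<noteq> {} \<and> continuous_on U f \<and> inj_on f U \<and> f ` U \<subseteq> A"
    by (elim exE) (erule that)
  then show ?thesis unfolding sa_dim_Pd using witness_bound[OF assms(2), of T U f] H by simp
qed

lemma sa_dim_lower: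
  fixes A C :: "(real^'n::finite) set"
  assumes cC: "convex C" and ne: "C \<noteq> {}" and inA: "\<And>c. c \<in> C \<Longrightarrow> sqrtv c \<in> A"
  shows "aff_dim C \<le> int (sa_dim A)"
proof -
  obtain c0 where c0: "c0 \<in> rel_interior C" using rel_interior_eq_empty[OF cC] ne by auto
  then obtain e where epos: "e > 0" and eb: "ball c0 e \<inter> affine hull C \<subseteq> C"
    unfolding mem_rel_interior_ball by blast
  have c0h: "c0 \<in> affine hull C" using c0 rel_interior_subset hull_subset[of C affine] by blast
  define T where "T = (\<lambda>x. x - c0) ` (affine hull C)"
  have T: "subspace T" unfolding T_def
    by (rule affine_diffs_subspace_subtract[OF affine_affine_hull c0h])
  have dT: "int (dim T) = aff_dim C"
    using aff_dim_subspace[OF T] aff_dim_translation_eq_subtract[of c0 "affine hull C"]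
    unfolding T_def by simp
  define U where "U = T \<inter> ball 0 e"
  define f where "f u = sqrtv (u + c0)" for u
  have "Pd A (dim T)"
    unfolding Pd_def
  proof (intro exI conjI)
    show "subspace T" by (rule T)
    show "dim T = dim T" ..
    show "openin (top_of_set T) U" unfolding U_def openin_open by (intro exI[of _ "ball 0 e"]) auto
    show "U \<noteq> {}" unfolding U_def using subspace_0[OF T] epos by auto
    show "continuous_on U f" unfolding f_def sqrtv_def by (intro continuous_intros)
    show "inj_on f U" by (rule inj_onI) (auto simp: f_def sqrtv_def vec_eq_iff)
    show "f ` U \<subseteq> A"
    proof
      fix y assume "y \<in> f ` U"
      then obtain u where u: "u \<in> U" "y = f u" by auto
      then obtain x where x: "x \<in> affine hull C" "u = x - c0" unfolding U_def T_def by auto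
      have "dist c0 x < e" using u(1) x unfolding U_def by (simp add: dist_norm norm_minus_commute)
      then have "x \<in> C" using eb x(1) by auto
      then show "y \<in> A" using inA u x unfolding f_def by simp
    qed
  qed
  then have "dim T \<le> Greatest (Pd A)"
    by (rule Greatest_le_nat) (rule Pd_bound)
  then show ?thesis unfolding sa_dim_Pd using dT by linarith
qed


lemma sqv_sqrtv: "(\<forall>i. 0 \<le> c$i) \<Longrightarrow> sqv (sqrtv c) = c"
  by (simp add: sqv_def sqrtv_def vec_eq_iff)

lemma K_tendsto: "x \<longlonglongrightarrow> p \<Longrightarrow> (\<lambda>k. K S (x k)) \<longlonglongrightarrow> K S p"
  unfolding K_def by (intro tendsto_intros)

theorem proposition5p1:
  fixes \<alpha> \<alpha>' :: "'n::finite set \<Rightarrow> int"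
  assumes "\<forall>S. \<alpha> S \<in> {-1, 0, 1}" and "\<forall>S. \<alpha>' S \<in> {-1, 0, 1}"
    and "Mset \<alpha> \<noteq> {}" and "Mset \<alpha>' \<noteq> {}"
    and "\<exists>x :: nat \<Rightarrow> real^'n. \<exists>p. (\<forall>k. x k \<in> Mset \<alpha>) \<and> x \<longlonglongrightarrow> p \<and> p \<in> Mset \<alpha>'"
  shows "\<alpha> = \<alpha>' \<or> dimM \<alpha>' < dimM \<alpha>"
proof (cases "\<alpha> = \<alpha>'")
  case True then show ?thesis by simp
next
  case False
  obtain x :: "nat \<Rightarrow> real^'n" and p where xM: "\<And>k. x k \<in> Mset \<alpha>" and lim: "x \<longlonglongrightarrow> p"
    and pM: "p \<in> Mset \<alpha>'" using assms(5) by blast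
  have rel: "\<alpha>' S = \<alpha> S \<or> \<alpha>' S = 0" for S
  proof -
    have sx: "sgn (K S (x k)) = of_int (\<alpha> S)" for k using xM[of k] by (simp add: Mset_def)
    have sp: "sgn (K S p) = of_int (\<alpha>' S)" using pM by (simp add: Mset_def)
    have L: "(\<lambda>k. K S (x k)) \<longlonglongrightarrow> K S p" by (rule K_tendsto[OF lim])
    consider "\<alpha> S = -1" | "\<alpha> S = 0" | "\<alpha> S = 1" using assms(1) by auto
    then show ?thesis
    proof cases
      case 1
      then have "K S (x k) < 0" for k using sx[of k] by (simp add: sgn_real_def split: if_splits)
      then have "K S p \<le> 0" by (intro LIMSEQ_le_const2[OF L]) (auto intro: less_imp_le)
      then have "\<alpha>' S \<noteq> 1" using sp by (auto simp: sgn_real_def split: if_splits)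
      then show ?thesis using 1 assms(2) by auto
    next
      case 2
      then have "K S (x k) = 0" for k using sx[of k] by (simp add: sgn_real_def split: if_splits)
      then have "(\<lambda>k. K S (x k)) = (\<lambda>k. 0)" by (rule ext)
      then have L0: "(\<lambda>k. K S (x k)) \<longlonglongrightarrow> 0" by (simp only: tendsto_const)
      have "K S p = 0" by (rule LIMSEQ_unique[OF L L0])
      then show ?thesis using sp 2 by simp
    next
      case 3
      then have "K S (x k) > 0" for k using sx[of k] by (simp add: sgn_real_def split: if_splits)
      then have "K S p \<ge> 0" by (intro LIMSEQ_le_const[OF L]) (auto intro: less_imp_le)
      then have "\<alpha>' S \<noteq> -1" using sp by (auto simp: sgn_real_def split: if_splits)
      then show ?thesis using 3 assms(2) by auto
    qed
  qed
  obtain S0 where S0: "\<alpha> S0 \<noteq> \<alpha>' S0" using False by auto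
  then have S0': "\<alpha>' S0 = 0" "\<alpha> S0 \<noteq> 0" using rel[of S0] by auto
  obtain b where bM: "b \<in> Mset \<alpha>" using assms(3) by auto
  have Kb: "K S0 b \<noteq> 0"
  proof
    assume "K S0 b = 0"
    moreover have "sgn (K S0 b) = of_int (\<alpha> S0)" using bM by (simp add: Mset_def)
    ultimately have "of_int (\<alpha> S0) = (0::real)" by simp
    then show False using S0' by simp
  qed
  have bC: "sqv b \<in> Cset \<alpha>" using bM Mset_sub Valpha_iff by blast
  have sub1: "Cset \<alpha>' \<subseteq> Cset \<alpha>"
  proof -
    have "\<alpha> S = 0 \<Longrightarrow> \<alpha>' S = 0" for S using rel[of S] by auto
    then show ?thesis unfolding Cset_def by auto
  qed
  have sub2: "Cset \<alpha>' \<subseteq> {c. LL S0 c = 0}"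
  proof
    fix c assume "c \<in> Cset \<alpha>'"
    then have "\<forall>S. \<alpha>' S = 0 \<longrightarrow> LL S c = 0" unfolding Cset_def by blast
    then show "c \<in> {c. LL S0 c = 0}" using S0'(1) by blast
  qed
  have H1: "affine hull Cset \<alpha>' \<subseteq> affine hull Cset \<alpha> \<inter> {c. LL S0 c = 0}"
    by (intro hull_minimal) (use sub1 sub2 hull_subset[of "Cset \<alpha>" affine] in
        \<open>auto intro: affine_Int affine_affine_hull affine_LL0\<close>)
  have H2: "sqv b \<in> affine hull Cset \<alpha>" by (rule subsetD[OF hull_subset[of "Cset \<alpha>" affine] bC])
  have H3: "sqv b \<notin> {c. LL S0 c = 0}" using Kb by (simp add: K_LL)
  have ne: "sqv b \<notin> affine hull Cset \<alpha>'" using H1 H3 by auto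
  have HA: "affine hull Cset \<alpha>' \<subseteq> affine hull Cset \<alpha>" using H1 by auto
  have "affine hull Cset \<alpha>' \<noteq> affine hull Cset \<alpha>" using ne H2 by auto
  then have "affine hull Cset \<alpha>' \<subset> affine hull Cset \<alpha>" using HA by (simp add: psubset_eq)
  then have lt: "aff_dim (Cset \<alpha>') < aff_dim (Cset \<alpha>)" by (rule aff_dim_psubset)
  have up: "int (dimM \<alpha>') \<le> aff_dim (Cset \<alpha>')"
    unfolding dimM_def
  proof (rule sa_dim_upper)
    show "Valpha \<alpha>' \<noteq> {}" using assms(4) Mset_sub by blast
    show "sqv ` Valpha \<alpha>' \<subseteq> Cset \<alpha>'" using Valpha_iff by blast
  qed
  have lo: "aff_dim (Cset \<alpha>) \<le> int (dimM \<alpha>)"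
    unfolding dimM_def
  proof (rule sa_dim_lower)
    show "convex (Cset \<alpha>)" by (rule convex_Cset)
    show "Cset \<alpha> \<noteq> {}" using bC by blast
    fix c assume "c \<in> Cset \<alpha>"
    moreover then have "\<forall>i. 0 \<le> c$i" by (simp add: Cset_def)
    ultimately show "sqrtv c \<in> Valpha \<alpha>" by (simp add: Valpha_iff sqv_sqrtv)
  qed
  show ?thesis using up lo lt by simp
qed

end
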